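(* Let $q:\mathsf D\to\mathbb R$ have sensitivity $\Delta q\in(0,\infty)$, and let $k>0$, $\theta>0$. If $\Lambda\sim\Gamma(k,\theta)$ (density $\frac{x^{k-1}e^{-x/\theta}}{\Gamma(k)\theta^k}$ for $x>0$), then the Randomized DP Laplace mechanism with reciprocal scale $\Lambda$ satisfies $\big((k+1)\ln(1+\Delta q\,\theta)\big)$-differential privacy; moreover $\ln[\mathbb E(\Lambda)/M'_\Lambda(-\Delta q)]=(k+1)\ln(1+\Delta q\,\theta)$.
   Context: Databases form a set $\mathsf D$ with a symmetric adjacency relation; the sensitivity of $q$ is $\Delta q=\sup\{|q(d)-q(d')|:d,d'\text{ adjacent}\}$. A mechanism $M$ is $\epsilon$-DP if $\mathbb P(M(d)\in S)\le e^\epsilon\mathbb P(M(d')\in S)$ for all adjacent $d,d'$ and Borel $S$. The Randomized DP Laplace mechanism with reciprocal-scale distribution $\Lambda$ (a random variable with values in $(0,\infty)$, playing the role of $1/b$ for the Laplace scale $b$) is defined by $\mathcal M_q(d)=q(d)+W$, where conditionally on $\Lambda=\lambda$ the noise $W$ is Laplace with mean $0$ and scale $1/\lambda$, i.e. has density $\frac{\lambda}{2}e^{-\lambda|w|}$; the pair $(\Lambda,W)$ is drawn independently of $d$. $M_\Lambda(t)=\mathbb E[e^{t\Lambda}]$, $M'_\Lambda(t)=\mathbb E[\Lambda e^{t\Lambda}]$. *)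

theory Defs
  imports "HOL-Probability.Probability"
begin

definition sensitivity :: "('d \<Rightarrow> 'd \<Rightarrow> bool) \<Rightarrow> ('d \<Rightarrow> real) \<Rightarrow> ereal" where
  "sensitivity adj q = (SUP p \<in> {(d, d'). adj d d'}. ereal \<bar>q (fst p) - q (snd p)\<bar>)"

definition differentially_private ::
  "('d \<Rightarrow> 'd \<Rightarrow> bool) \<Rightarrow> ('d \<Rightarrow> real measure) \<Rightarrow> real \<Rightarrow> bool" where
  "differentially_private adj M eps \<longleftrightarrow>
     (\<forall>d d'. adj d d' \<longrightarrow>
        (\<forall>S \<in> sets borel. measure (M d) S \<le> exp eps * measure (M d') S))"

definition gamma_pdf :: "real \<Rightarrow> real \<Rightarrow> real \<Rightarrow> real" where
  "gamma_pdf k \<theta> x = (if x > 0 then x powr (k - 1) * exp (- x / \<theta>) / (Gamma k * \<theta> powr k) else 0)"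

definition laplace_pdf :: "real \<Rightarrow> real \<Rightarrow> real" where
  "laplace_pdf l w = (if l > 0 then l / 2 * exp (- l * \<bar>w\<bar>) else 0)"

(* Joint law of (Lambda, W): Lambda has density f on (0,\<infinity>), W | Lambda = l is Laplace(0, 1/l) *)
definition rdp_noise :: "(real \<Rightarrow> real) \<Rightarrow> (real \<times> real) measure" where
  "rdp_noise f = density (lborel \<Otimes>\<^sub>M lborel) (\<lambda>(l, w). ennreal (f l * laplace_pdf l w))"

definition rdp_laplace_mech :: "(real \<Rightarrow> real) \<Rightarrow> ('d \<Rightarrow> real) \<Rightarrow> 'd \<Rightarrow> real measure" where
  "rdp_laplace_mech f q d = distr (rdp_noise f) borel (\<lambda>(l, w). q d + w)"

(* E[Lambda] and M'_Lambda(t) = E[Lambda e^{t Lambda}] for Lambda with density f *)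
definition mean_of_pdf :: "(real \<Rightarrow> real) \<Rightarrow> real" where
  "mean_of_pdf f = (\<integral>x. x * f x \<partial>lborel)"

definition mgf_deriv_of_pdf :: "(real \<Rightarrow> real) \<Rightarrow> real \<Rightarrow> real" where
  "mgf_deriv_of_pdf f t = (\<integral>x. x * exp (t * x) * f x \<partial>lborel)"

end

theory Submission
  imports Defs
begin

lemma gamma_nn:
  assumes s: "s > 0" and a: "a > (0::real)"
  shows "(\<integral>\<^sup>+x. ennreal (indicator {0..} x * x powr (s-1) * exp (-(a*x))) \<partial>lborel)
         = ennreal (Gamma s / a powr s)"
proof -
  have "(\<integral>\<^sup>+x. ennreal (indicator {0..} x * x powr (s-1) * exp (-(a*x))) \<partial>lborel)
     = ennreal \<bar>1/a\<bar> * (\<integral>\<^sup>+x. ennreal (indicator {0..} (0 + (1/a)*x) * (0 + (1/a)*x) powr (s-1) * exp (-(a*(0 + (1/a)*x)))) \<partial>lborel)"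
    using a by (intro nn_integral_real_affine) auto
  also have "\<dots> = (\<integral>\<^sup>+x. ennreal (1 / a powr s) * ennreal (indicator {0..} x * x powr (s - 1) / exp x) \<partial>lborel)"
    apply (subst nn_integral_cmult[symmetric])
     apply simp
    apply (intro nn_integral_cong)
    using a apply (auto simp: indicator_def ennreal_mult'[symmetric] powr_divide powr_diff exp_minus field_simps)
    done
  also have "\<dots> = ennreal (1 / a powr s) * ennreal (Gamma s)"
    using s by (subst nn_integral_cmult) (auto simp: Gamma_conv_nn_integral_real)
  also have "\<dots> = ennreal (Gamma s / a powr s)"
    using s by (simp add: ennreal_mult'[symmetric] Gamma_real_pos less_imp_le)
  finally show ?thesis .
qed

lemma gamma_pdf_nonneg: "0 < \<theta> \<Longrightarrow> 0 < k \<Longrightarrow> 0 \<le> gamma_pdf k \<theta> x"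
  by (auto simp: gamma_pdf_def intro!: divide_nonneg_pos mult_nonneg_nonneg Gamma_real_pos)

lemma gamma_pdf_nonpos: "x \<le> 0 \<Longrightarrow> gamma_pdf k \<theta> x = 0"
  by (auto simp: gamma_pdf_def)

lemma gamma_moment:
  assumes k: "0 < k" and th: "0 < \<theta>" and b: "0 \<le> b"
  shows "(\<integral>\<^sup>+l. ennreal (gamma_pdf k \<theta> l * l * exp (-(b*l))) \<partial>lborel)
         = ennreal (k*\<theta> / (1+\<theta>*b) powr (k+1))"
proof -
  define C where "C = Gamma k * \<theta> powr k"
  have C: "C > 0" using k th by (simp add: C_def Gamma_real_pos)
  have pw: "gamma_pdf k \<theta> l * l * exp (-(b*l)) =
      (1/C) * (indicator {0..} l * l powr ((k+1)-1) * exp (-((1/\<theta>+b)*l)))" for l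
  proof (cases "l > 0")
    case True
    have A: "l powr (k-1) * l = l powr k" using True by (simp add: powr_diff)
    have E: "exp (-l/\<theta>) * exp (-(b*l)) = exp (-((1/\<theta>+b)*l))"
      by (simp add: exp_add[symmetric] field_simps)
    have "gamma_pdf k \<theta> l * l * exp (-(b*l)) = (l powr (k-1) * l) * (exp (-l/\<theta>) * exp (-(b*l))) / C"
      using True by (simp add: gamma_pdf_def C_def)
    also have "\<dots> = l powr k * exp (-((1/\<theta>+b)*l)) / C" by (simp only: A E)
    finally have "gamma_pdf k \<theta> l * l * exp (-(b*l)) = l powr k * exp (-((1/\<theta>+b)*l)) / C" .
    then show ?thesis using True by (simp add: indicator_def)
  next
    case False
    then show ?thesis by (cases "l = 0") (auto simp: gamma_pdf_def indicator_def)
  qed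
  have "(\<integral>\<^sup>+l. ennreal (gamma_pdf k \<theta> l * l * exp (-(b*l))) \<partial>lborel)
     = (\<integral>\<^sup>+l. ennreal (1/C) * ennreal (indicator {0..} l * l powr ((k+1)-1) * exp (-((1/\<theta>+b)*l))) \<partial>lborel)"
    unfolding pw using C by (intro nn_integral_cong) (simp add: ennreal_mult'[symmetric])
  also have "\<dots> = ennreal (1/C) * ennreal (Gamma (k+1) / (1/\<theta>+b) powr (k+1))"
  proof -
    have g: "(\<integral>\<^sup>+l. ennreal (indicator {0..} l * l powr ((k+1)-1) * exp (-((1/\<theta>+b)*l))) \<partial>lborel)
        = ennreal (Gamma (k+1) / (1/\<theta>+b) powr (k+1))"
      using k th b by (intro gamma_nn) (auto simp: add_pos_nonneg)
    show ?thesis by (subst nn_integral_cmult) (auto simp: g[simplified])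
  qed
  also have "\<dots> = ennreal (k*\<theta> / (1+\<theta>*b) powr (k+1))"
  proof -
    have e: "1/\<theta>+b = (1+\<theta>*b)/\<theta>" using th by (simp add: field_simps)
    have "(1/C) * (Gamma (k+1) / (1/\<theta>+b) powr (k+1)) = k*\<theta> / (1+\<theta>*b) powr (k+1)"
    proof -
      have gp: "Gamma (k+1) = k * Gamma k" using k by (intro Gamma_plus1) (auto simp: nonpos_Ints_def)
      have G0: "Gamma k > 0" using k by (simp add: Gamma_real_pos)
      have pb: "1+\<theta>*b > 0" using th b by (simp add: add_pos_nonneg)
      then have P0: "(1+\<theta>*b) powr k > 0" by simp
      have t0: "\<theta> powr k > 0" using th by simp
      have Q: "((1+\<theta>*b)/\<theta>) powr (k+1) = (1+\<theta>*b) powr k * (1+\<theta>*b) / (\<theta> powr k * \<theta>)"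
      proof -
        have "1+\<theta>*b > 0" using th b by (simp add: add_pos_nonneg)
        then show ?thesis using th by (simp add: powr_divide powr_add)
      qed
      have Q2: "(1+\<theta>*b) powr (k+1) = (1+\<theta>*b) powr k * (1+\<theta>*b)"
        using pb by (simp add: powr_add)
      have G1: "Gamma k \<noteq> 0" using G0 by simp
      show ?thesis unfolding e C_def gp Q Q2
        using th k b G1 P0 t0 pb by (simp add: field_simps)
    qed
    then show ?thesis using C k by (simp add: ennreal_mult'[symmetric] Gamma_real_pos less_imp_le)
  qed
  finally show ?thesis .
qed

lemma F_meas[measurable]:
  "(\<lambda>(l, w). ennreal (gamma_pdf k \<theta> l * laplace_pdf l w)) \<in> borel_measurable (lborel \<Otimes>\<^sub>M lborel)"
  unfolding gamma_pdf_def laplace_pdf_def by measurable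

lemma gamma_pdf_meas[measurable]: "gamma_pdf k \<theta> \<in> borel_measurable borel"
  unfolding gamma_pdf_def by measurable

lemma laplace_mass:
  assumes l: "0 < l"
  shows "(\<integral>\<^sup>+w. ennreal (laplace_pdf l w) \<partial>lborel) \<le> 1"
proof -
  have e1: "(\<integral>\<^sup>+w. ennreal (exponential_density l w) \<partial>lborel) = 1"
  proof -
    interpret prob_space "density lborel (exponential_density l)"
      using prob_space_exponential_density[OF l] .
    have "emeasure (density lborel (exponential_density l)) UNIV = 1"
      using emeasure_space_1 by simp
    then show ?thesis
      by (subst (asm) emeasure_density) auto
  qed
  have e2: "(\<integral>\<^sup>+w. ennreal (exponential_density l (-w)) \<partial>lborel) = 1"
    using nn_integral_real_affine[of "\<lambda>w. ennreal (exponential_density l w)" "-1" 0] e1 by simp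
  have nn: "0 \<le> exponential_density l w" for w
    using l by (auto simp: exponential_density_def)
  have "(\<integral>\<^sup>+w. ennreal (laplace_pdf l w) \<partial>lborel) \<le>
        (\<integral>\<^sup>+w. ennreal (1/2 * exponential_density l w + 1/2 * exponential_density l (-w)) \<partial>lborel)"
  proof (intro nn_integral_mono ennreal_leI)
    fix w
    show "laplace_pdf l w \<le> 1/2 * exponential_density l w + 1/2 * exponential_density l (-w)"
      using l by (auto simp: laplace_pdf_def exponential_density_def abs_if mult.commute)
  qed
  also have "\<dots> = (\<integral>\<^sup>+w. ennreal (1/2) * ennreal (exponential_density l w) + ennreal (1/2) * ennreal (exponential_density l (-w)) \<partial>lborel)"
    apply (intro nn_integral_cong)
    apply (subst ennreal_plus)
    using nn apply simp
    using nn apply simp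
    apply (subst ennreal_mult', simp)+
    apply simp
    done
  also have "\<dots> = ennreal (1/2) * 1 + ennreal (1/2) * 1"
    by (subst nn_integral_add) (auto simp: nn_integral_cmult e1 e2)
  also have "\<dots> = ennreal (1/2 + 1/2)" by (subst ennreal_plus) auto
  also have "\<dots> = 1" by simp
  finally show ?thesis .
qed

lemma inner_int:
  assumes k: "0 < k" and th: "0 < \<theta>"
  shows "(\<integral>\<^sup>+l. ennreal (gamma_pdf k \<theta> l * laplace_pdf l w) \<partial>lborel)
         = ennreal (k*\<theta>/2 / (1+\<theta>*\<bar>w\<bar>) powr (k+1))"
proof -
  have pw: "gamma_pdf k \<theta> l * laplace_pdf l w = 1/2 * (gamma_pdf k \<theta> l * l * exp (-(\<bar>w\<bar>*l)))" for l
    by (cases "l > 0") (auto simp: laplace_pdf_def gamma_pdf_nonpos mult_ac)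
  have "(\<integral>\<^sup>+l. ennreal (gamma_pdf k \<theta> l * laplace_pdf l w) \<partial>lborel)
      = (\<integral>\<^sup>+l. ennreal (1/2) * ennreal (gamma_pdf k \<theta> l * l * exp (-(\<bar>w\<bar>*l))) \<partial>lborel)"
    unfolding pw by (intro nn_integral_cong) (subst ennreal_mult', simp_all)
  also have "\<dots> = ennreal (1/2) * ennreal (k*\<theta> / (1+\<theta>*\<bar>w\<bar>) powr (k+1))"
    using k th by (subst nn_integral_cmult) (auto simp: gamma_moment)
  also have "\<dots> = ennreal (k*\<theta>/2 / (1+\<theta>*\<bar>w\<bar>) powr (k+1))"
    by (subst ennreal_mult'[symmetric]) auto
  finally show ?thesis .
qed

lemma gamma_mass_finite:
  assumes k: "0 < k" and th: "0 < \<theta>"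
  shows "(\<integral>\<^sup>+l. ennreal (gamma_pdf k \<theta> l) \<partial>lborel) < \<infinity>"
proof -
  define C where "C = Gamma k * \<theta> powr k"
  have C: "C > 0" using k th by (simp add: C_def Gamma_real_pos)
  have pw: "gamma_pdf k \<theta> l = (1/C) * (indicator {0..} l * l powr (k-1) * exp (-((1/\<theta>)*l)))" for l
    by (cases "l > 0"; cases "l = 0") (auto simp: gamma_pdf_def C_def indicator_def)
  have "(\<integral>\<^sup>+l. ennreal (gamma_pdf k \<theta> l) \<partial>lborel)
      = (\<integral>\<^sup>+l. ennreal (1/C) * ennreal (indicator {0..} l * l powr (k-1) * exp (-((1/\<theta>)*l))) \<partial>lborel)"
    unfolding pw using C by (intro nn_integral_cong) (simp add: ennreal_mult'[symmetric])
  also have "\<dots> = ennreal (1/C) * ennreal (Gamma k / (1/\<theta>) powr k)"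
  proof -
    have g: "(\<integral>\<^sup>+l. ennreal (indicator {0..} l * l powr (k-1) * exp (-((1/\<theta>)*l))) \<partial>lborel)
        = ennreal (Gamma k / (1/\<theta>) powr k)"
      using k th by (intro gamma_nn) auto
    show ?thesis by (subst nn_integral_cmult) (auto simp: g[simplified])
  qed
  also have "\<dots> = ennreal (1/C * (Gamma k / (1/\<theta>) powr k))"
    using C by (intro ennreal_mult'[symmetric]) simp
  finally show ?thesis by (metis ennreal_less_top infinity_ennreal_def)
qed

lemma noise_finite:
  assumes k: "0 < k" and th: "0 < \<theta>"
  shows "emeasure (rdp_noise (gamma_pdf k \<theta>)) UNIV < \<infinity>"
proof -
  have U: "UNIV \<in> sets (lborel \<Otimes>\<^sub>M lborel :: (real \<times> real) measure)"
    using sets.top[of "lborel \<Otimes>\<^sub>M lborel :: (real \<times> real) measure"] by (simp add: space_pair_measure)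
  have "emeasure (rdp_noise (gamma_pdf k \<theta>)) UNIV
      = (\<integral>\<^sup>+x. (case x of (l, w) \<Rightarrow> ennreal (gamma_pdf k \<theta> l * laplace_pdf l w)) \<partial>(lborel \<Otimes>\<^sub>M lborel))"
    unfolding rdp_noise_def emeasure_density[OF F_meas U] by simp
  also have "\<dots> = (\<integral>\<^sup>+l. \<integral>\<^sup>+w. ennreal (gamma_pdf k \<theta> l * laplace_pdf l w) \<partial>lborel \<partial>lborel)"
    using lborel.nn_integral_fst[OF F_meas[of k \<theta>]] by simp
  also have "\<dots> \<le> (\<integral>\<^sup>+l. ennreal (gamma_pdf k \<theta> l) \<partial>lborel)"
  proof (intro nn_integral_mono)
    fix l :: real
    show "(\<integral>\<^sup>+w. ennreal (gamma_pdf k \<theta> l * laplace_pdf l w) \<partial>lborel) \<le> ennreal (gamma_pdf k \<theta> l)"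
    proof (cases "l > 0")
      case True
      have "(\<integral>\<^sup>+w. ennreal (gamma_pdf k \<theta> l * laplace_pdf l w) \<partial>lborel)
          = ennreal (gamma_pdf k \<theta> l) * (\<integral>\<^sup>+w. ennreal (laplace_pdf l w) \<partial>lborel)"
      proof -
        have "(\<integral>\<^sup>+w. ennreal (gamma_pdf k \<theta> l * laplace_pdf l w) \<partial>lborel)
            = (\<integral>\<^sup>+w. ennreal (gamma_pdf k \<theta> l) * ennreal (laplace_pdf l w) \<partial>lborel)"
          by (intro nn_integral_cong ennreal_mult' gamma_pdf_nonneg th k)
        also have "\<dots> = ennreal (gamma_pdf k \<theta> l) * (\<integral>\<^sup>+w. ennreal (laplace_pdf l w) \<partial>lborel)"
          by (rule nn_integral_cmult) (unfold laplace_pdf_def, measurable)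
        finally show ?thesis .
      qed
      also have "\<dots> \<le> ennreal (gamma_pdf k \<theta> l) * 1"
        using laplace_mass[OF True] by (intro mult_left_mono) auto
      finally show ?thesis by simp
    qed (simp add: gamma_pdf_nonpos)
  qed
  also have "\<dots> < \<infinity>" using gamma_mass_finite[OF k th] .
  finally show ?thesis .
qed

lemma mech_emeasure:
  assumes k: "0 < k" and th: "0 < \<theta>" and S: "S \<in> sets borel"
  shows "emeasure (rdp_laplace_mech (gamma_pdf k \<theta>) q d) S
       = (\<integral>\<^sup>+w. ennreal (k*\<theta>/2 / (1+\<theta>*\<bar>w\<bar>) powr (k+1)) * indicator S (q d + w) \<partial>lborel)"
proof -
  define N where "N = rdp_noise (gamma_pdf k \<theta>)"
  have sN: "sets N = sets (lborel \<Otimes>\<^sub>M lborel)" unfolding N_def rdp_noise_def by simp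
  have gm: "(\<lambda>(l::real, w). q d + w) \<in> measurable N borel"
    by (subst measurable_cong_sets[OF sN refl]) measurable
  have Sm[measurable]: "S \<in> sets borel" by fact
  have "emeasure (rdp_laplace_mech (gamma_pdf k \<theta>) q d) S
      = (\<integral>\<^sup>+y. indicator S y \<partial>(distr N borel (\<lambda>(l, w). q d + w)))"
    unfolding rdp_laplace_mech_def N_def[symmetric] using S by (simp add: nn_integral_indicator)
  also have "\<dots> = (\<integral>\<^sup>+x. indicator S (case x of (l, w) \<Rightarrow> q d + w) \<partial>N)"
    using gm by (subst nn_integral_distr) auto
  also have "\<dots> = (\<integral>\<^sup>+x. (case x of (l, w) \<Rightarrow> ennreal (gamma_pdf k \<theta> l * laplace_pdf l w)) * indicator S (case x of (l, w) \<Rightarrow> q d + w) \<partial>(lborel \<Otimes>\<^sub>M lborel))"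
    unfolding N_def rdp_noise_def by (subst nn_integral_density) auto
  also have "\<dots> = (\<integral>\<^sup>+w. \<integral>\<^sup>+l. ennreal (gamma_pdf k \<theta> l * laplace_pdf l w) * indicator S (q d + w) \<partial>lborel \<partial>lborel)"
    by (subst lborel_pair.nn_integral_snd[symmetric]) (auto simp: case_prod_unfold)
  also have "\<dots> = (\<integral>\<^sup>+w. ennreal (k*\<theta>/2 / (1+\<theta>*\<bar>w\<bar>) powr (k+1)) * indicator S (q d + w) \<partial>lborel)"
  proof (intro nn_integral_cong)
    fix w
    show "(\<integral>\<^sup>+l. ennreal (gamma_pdf k \<theta> l * laplace_pdf l w) * indicator S (q d + w) \<partial>lborel)
        = ennreal (k*\<theta>/2 / (1+\<theta>*\<bar>w\<bar>) powr (k+1)) * indicator S (q d + w)"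
      by (subst nn_integral_multc, unfold gamma_pdf_def laplace_pdf_def, measurable)
         (simp only: inner_int[OF k th, unfolded gamma_pdf_def laplace_pdf_def])
  qed
  finally show ?thesis .
qed

lemma mech_finite:
  assumes k: "0 < k" and th: "0 < \<theta>"
  shows "emeasure (rdp_laplace_mech (gamma_pdf k \<theta>) q d) S < \<infinity>"
proof -
  define N where "N = rdp_noise (gamma_pdf k \<theta>)"
  have sN: "sets N = sets (lborel \<Otimes>\<^sub>M lborel)" unfolding N_def rdp_noise_def by simp
  have spN: "space N = UNIV" unfolding N_def rdp_noise_def by (simp add: space_pair_measure)
  have gm: "(\<lambda>(l::real, w). q d + w) \<in> measurable N borel"
    by (subst measurable_cong_sets[OF sN refl]) measurable
  have "emeasure (rdp_laplace_mech (gamma_pdf k \<theta>) q d) S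
      \<le> emeasure (rdp_laplace_mech (gamma_pdf k \<theta>) q d) (space (rdp_laplace_mech (gamma_pdf k \<theta>) q d))"
    by (rule emeasure_space)
  also have "\<dots> = emeasure N UNIV"
    unfolding rdp_laplace_mech_def N_def[symmetric] using gm
    by (subst emeasure_distr) (auto simp: spN)
  also have "\<dots> < \<infinity>" unfolding N_def by (rule noise_finite[OF k th])
  finally show ?thesis .
qed

lemma h_ineq:
  fixes k \<theta> \<Delta> w c :: real
  assumes k: "0 < k" and th: "0 < \<theta>" and D: "0 < \<Delta>" and c: "\<bar>c\<bar> \<le> \<Delta>"
  shows "k*\<theta>/2 / (1+\<theta>*\<bar>w\<bar>) powr (k+1) \<le> (1 + \<Delta>*\<theta>) powr (k+1) * (k*\<theta>/2 / (1+\<theta>*\<bar>w+c\<bar>) powr (k+1))"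
proof -
  have p1: "0 < 1+\<theta>*\<bar>w\<bar>" using th by (simp add: add_pos_nonneg)
  have p2: "0 < 1+\<theta>*\<bar>w+c\<bar>" using th by (simp add: add_pos_nonneg)
  have "1+\<theta>*\<bar>w+c\<bar> \<le> (1+\<Delta>*\<theta>) * (1+\<theta>*\<bar>w\<bar>)"
  proof -
    have "\<bar>w+c\<bar> \<le> \<bar>w\<bar> + \<Delta>" using c by linarith
    then have "\<theta>*\<bar>w+c\<bar> \<le> \<theta>*\<bar>w\<bar> + \<theta>*\<Delta>" using th
      by (metis distrib_left mult_left_mono less_imp_le)
    moreover have "0 \<le> \<Delta>*\<theta>*(\<theta>*\<bar>w\<bar>)" using th D by simp
    ultimately show ?thesis by (simp add: algebra_simps)
  qed
  then have "(1+\<theta>*\<bar>w+c\<bar>) powr (k+1) \<le> ((1+\<Delta>*\<theta>) * (1+\<theta>*\<bar>w\<bar>)) powr (k+1)"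
    using p2 k by (intro powr_mono2) auto
  also have "\<dots> = (1+\<Delta>*\<theta>) powr (k+1) * (1+\<theta>*\<bar>w\<bar>) powr (k+1)"
    using th D p1 by (intro powr_mult)
  finally have L: "(1+\<theta>*\<bar>w+c\<bar>) powr (k+1) \<le> (1+\<Delta>*\<theta>) powr (k+1) * (1+\<theta>*\<bar>w\<bar>) powr (k+1)" .
  have q1: "0 < (1+\<theta>*\<bar>w\<bar>) powr (k+1)" using p1 by simp
  have q2: "0 < (1+\<theta>*\<bar>w+c\<bar>) powr (k+1)" using p2 by simp
  have kt: "0 < k*\<theta>/2" using k th by simp
  define A where "A = k*\<theta>/2"
  define X where "X = (1+\<theta>*\<bar>w\<bar>) powr (k+1)"
  define Y where "Y = (1+\<theta>*\<bar>w+c\<bar>) powr (k+1)"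
  define E where "E = (1+\<Delta>*\<theta>) powr (k+1)"
  have "A * Y \<le> A * (E * X)" using L kt unfolding A_def X_def Y_def E_def by (intro mult_left_mono) auto
  then have "A / X \<le> E * (A / Y)" using q1 q2 unfolding X_def[symmetric] Y_def[symmetric]
    by (simp add: field_simps)
  then show ?thesis unfolding A_def X_def Y_def E_def .
qed

lemma moment_integral:
  assumes k: "0 < k" and th: "0 < \<theta>" and b: "0 \<le> b"
  shows "(\<integral>x. x * exp (-b * x) * gamma_pdf k \<theta> x \<partial>lborel) = k*\<theta> / (1+\<theta>*b) powr (k+1)"
proof -
  have nn: "0 \<le> x * exp (-b * x) * gamma_pdf k \<theta> x" for x
    by (cases "x > 0") (auto simp: gamma_pdf_nonpos intro!: mult_nonneg_nonneg gamma_pdf_nonneg k th)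
  have "(\<integral>x. x * exp (-b * x) * gamma_pdf k \<theta> x \<partial>lborel)
      = enn2real (\<integral>\<^sup>+x. ennreal (x * exp (-b * x) * gamma_pdf k \<theta> x) \<partial>lborel)"
    using nn by (intro integral_eq_nn_integral) auto
  also have "(\<integral>\<^sup>+x. ennreal (x * exp (-b * x) * gamma_pdf k \<theta> x) \<partial>lborel)
      = (\<integral>\<^sup>+x. ennreal (gamma_pdf k \<theta> x * x * exp (-(b * x))) \<partial>lborel)"
    by (intro nn_integral_cong) (simp add: mult_ac)
  also have "\<dots> = ennreal (k*\<theta> / (1+\<theta>*b) powr (k+1))" by (rule gamma_moment[OF k th b])
  finally show ?thesis using k th b by (simp add: add_pos_nonneg less_imp_le)
qed

theorem mainTheorem9:
  fixes adj :: "'d \<Rightarrow> 'd \<Rightarrow> bool" and q :: "'d \<Rightarrow> real"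
    and \<Delta> k \<theta> :: real
  assumes "symp adj"
    and "sensitivity adj q = ereal \<Delta>" and "0 < \<Delta>"
    and "0 < k" and "0 < \<theta>"
  shows "differentially_private adj (rdp_laplace_mech (gamma_pdf k \<theta>) q)
           ((k + 1) * ln (1 + \<Delta> * \<theta>))
         \<and> ln (mean_of_pdf (gamma_pdf k \<theta>) / mgf_deriv_of_pdf (gamma_pdf k \<theta>) (- \<Delta>))
           = (k + 1) * ln (1 + \<Delta> * \<theta>)"
proof
  note sens = assms(2) and D = assms(3) and k = assms(4) and th = assms(5)
  have pos: "0 < 1 + \<Delta> * \<theta>" using D th by (simp add: add_pos_nonneg)
  define E where "E = (1 + \<Delta> * \<theta>) powr (k+1)"
  have E: "exp ((k + 1) * ln (1 + \<Delta> * \<theta>)) = E"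
    using pos by (simp add: E_def powr_def mult.commute)
  have E0: "0 \<le> E" by (simp add: E_def)
  define h where "h = (\<lambda>w::real. k*\<theta>/2 / (1+\<theta>*\<bar>w\<bar>) powr (k+1))"
  show "differentially_private adj (rdp_laplace_mech (gamma_pdf k \<theta>) q) ((k + 1) * ln (1 + \<Delta> * \<theta>))"
    unfolding differentially_private_def E
  proof (intro allI impI ballI)
    fix d d' S assume adj: "adj d d'" and S: "S \<in> sets (borel :: real measure)"
    have "ereal \<bar>q d - q d'\<bar> \<le> sensitivity adj q"
      unfolding sensitivity_def
      using SUP_upper[of "(d,d')" "{(x,y). adj x y}" "\<lambda>p. ereal \<bar>q (fst p) - q (snd p)\<bar>"] adj by simp
    then have c: "\<bar>q d - q d'\<bar> \<le> \<Delta>" using sens by simp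
    have Sm[measurable]: "S \<in> sets borel" by fact
    have hm[measurable]: "h \<in> borel_measurable borel" unfolding h_def by measurable
    let ?M = "rdp_laplace_mech (gamma_pdf k \<theta>) q"
    have "emeasure (?M d) S = (\<integral>\<^sup>+w. ennreal (h w) * indicator S (q d + w) \<partial>lborel)"
      unfolding h_def by (rule mech_emeasure[OF k th S])
    also have "\<dots> \<le> (\<integral>\<^sup>+w. ennreal E * (ennreal (h ((q d - q d') + 1 * w)) * indicator S (q d' + ((q d - q d') + 1 * w))) \<partial>lborel)"
    proof (intro nn_integral_mono)
      fix w
      have "h w \<le> E * h (w + (q d - q d'))"
        unfolding h_def E_def by (rule h_ineq[OF k th D c])
      then have "ennreal (h w) \<le> ennreal E * ennreal (h ((q d - q d') + 1 * w))"
        using E0 by (simp add: ennreal_mult'[symmetric] add.commute ennreal_leI)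
      moreover have "q d' + ((q d - q d') + 1 * w) = q d + w" by simp
      ultimately show "ennreal (h w) * indicator S (q d + w) \<le> ennreal E * (ennreal (h ((q d - q d') + 1 * w)) * indicator S (q d' + ((q d - q d') + 1 * w)))"
        by (simp add: indicator_def mult.assoc)
    qed
    also have "\<dots> = ennreal E * (\<integral>\<^sup>+w. ennreal (h ((q d - q d') + 1 * w)) * indicator S (q d' + ((q d - q d') + 1 * w)) \<partial>lborel)"
      by (rule nn_integral_cmult) measurable
    also have "(\<integral>\<^sup>+w. ennreal (h ((q d - q d') + 1 * w)) * indicator S (q d' + ((q d - q d') + 1 * w)) \<partial>lborel)
        = (\<integral>\<^sup>+u. ennreal (h u) * indicator S (q d' + u) \<partial>lborel)"
      using nn_integral_real_affine[of "\<lambda>u. ennreal (h u) * indicator S (q d' + u)" 1 "q d - q d'"] by simp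
    also have "\<dots> = emeasure (?M d') S"
      unfolding h_def by (rule mech_emeasure[OF k th S, symmetric])
    finally have le: "emeasure (?M d) S \<le> ennreal E * emeasure (?M d') S" .
    have f1: "emeasure (?M d) S \<noteq> \<top>" using mech_finite[OF k th, of q d S] by simp
    have f2: "emeasure (?M d') S \<noteq> \<top>" using mech_finite[OF k th, of q d' S] by simp
    have "ennreal (measure (?M d) S) \<le> ennreal (E * measure (?M d') S)"
      using le E0 by (simp add: emeasure_eq_ennreal_measure[OF f1] emeasure_eq_ennreal_measure[OF f2] ennreal_mult')
    then show "measure (?M d) S \<le> E * measure (?M d') S"
      using E0 by (simp add: ennreal_le_iff)
  qed
next
  note D = assms(3) and k = assms(4) and th = assms(5)
  have pos: "0 < 1 + \<Delta> * \<theta>" using D th by (simp add: add_pos_nonneg)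
  have m: "mean_of_pdf (gamma_pdf k \<theta>) = k * \<theta>"
    using moment_integral[OF k th, of 0] unfolding mean_of_pdf_def by simp
  have g: "mgf_deriv_of_pdf (gamma_pdf k \<theta>) (- \<Delta>) = k*\<theta> / (1+\<theta>*\<Delta>) powr (k+1)"
    using moment_integral[OF k th, of \<Delta>] D unfolding mgf_deriv_of_pdf_def by simp
  have "mean_of_pdf (gamma_pdf k \<theta>) / mgf_deriv_of_pdf (gamma_pdf k \<theta>) (- \<Delta>) = (1 + \<Delta> * \<theta>) powr (k+1)"
    unfolding m g using k th by (simp add: mult.commute)
  then show "ln (mean_of_pdf (gamma_pdf k \<theta>) / mgf_deriv_of_pdf (gamma_pdf k \<theta>) (- \<Delta>)) = (k + 1) * ln (1 + \<Delta> * \<theta>)"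
    using pos by (simp add: ln_powr)
qed

end
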